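(* Consider any one of the following games on $n$ cups: the fixed $p$-processor cup game (for some fixed $p$) or the variable-processor cup game, each in either the non-negative-fill version or the negative-fill version. Then for every state $A$ and every game length $t\ge 0$, $\operatorname{GREEDY}(A,t)=\operatorname{OPT}(A,t)$.
   Context: A state is a multiset of $n$ real fills (states equal up to permutation are identified). In the variable-processor cup game, in each round the filler chooses an integer $1\le p\le n$ and reals $a_1,\dots,a_n\in[0,1]$ with $\sum_i a_i=p$ and adds $a_i$ to cup $i$; then the emptier chooses exactly $p$ distinct cups and removes $1$ unit from each: in the non-negative-fill version a chosen cup with fill $x$ becomes $\max(0,x-1)$, in the negative-fill version it becomes $x-1$. The fixed $p$-processor cup game is the same except that $p$ is the same fixed value in every round. The backlog of a state is its maximum fill. $\operatorname{OPT}(S,0)$ is the backlog of $S$, and for $t>0$, $\operatorname{OPT}(S,t)=\sup_{S'}\min_{S''}\operatorname{OPT}(S'',t-1)$, where $S'$ ranges over states reachable from $S$ by a filler move and $S''$ over states reachable from $S'$ by an emptier move. $\operatorname{GREEDY}(S,t)$ is the supremum backlog a filler can achieve at the end of a $t$-round game starting from $S$ when the emptier is greedy, i.e. always empties from the $p$ fullest cups after the filler's move. *)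

theory Defs
  imports Complex_Main "HOL-Library.Multiset"
begin

datatype proc_mode = Fixed nat | Variable

datatype fill_mode = NonNeg | Neg

type_synonym state = "real multiset"

definition backlog :: "state \<Rightarrow> real" where
  "backlog S = Max (set_mset S)"

fun procs :: "proc_mode \<Rightarrow> nat \<Rightarrow> nat set" where
  "procs (Fixed p) n = {p}"
| "procs Variable n = {1..n}"

fun dec :: "fill_mode \<Rightarrow> real \<Rightarrow> real" where
  "dec NonNeg x = max 0 (x - 1)"
| "dec Neg x = x - 1"

text \<open>Filler moves: pairs (resulting state, chosen number of processors p).\<close>
definition filler_moves :: "proc_mode \<Rightarrow> state \<Rightarrow> (state \<times> nat) set" where
  "filler_moves pm S =
     {(mset (map2 (+) xs as), p) | xs as p.
        mset xs = S \<and> length as = length xs \<and> (\<forall>a\<in>set as. 0 \<le> a \<and> a \<le> 1) \<and>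
        sum_list as = real p \<and> p \<in> procs pm (size S)}"

definition emptier_moves :: "fill_mode \<Rightarrow> state \<Rightarrow> nat \<Rightarrow> state set" where
  "emptier_moves fm S p =
     {mset (map (\<lambda>i. if i \<in> I then dec fm (xs ! i) else xs ! i) [0..<length xs]) | xs I.
        mset xs = S \<and> I \<subseteq> {..<length xs} \<and> card I = p}"

definition greedy_empty :: "fill_mode \<Rightarrow> state \<Rightarrow> nat \<Rightarrow> state" where
  "greedy_empty fm S p =
     (let xs = rev (sorted_list_of_multiset S) in mset (map (dec fm) (take p xs) @ drop p xs))"

fun OPT :: "proc_mode \<Rightarrow> fill_mode \<Rightarrow> state \<Rightarrow> nat \<Rightarrow> real" where
  "OPT pm fm S 0 = backlog S"
| "OPT pm fm S (Suc t) =
     (SUP m \<in> filler_moves pm S. INF S'' \<in> emptier_moves fm (fst m) (snd m). OPT pm fm S'' t)"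

fun GREEDY :: "proc_mode \<Rightarrow> fill_mode \<Rightarrow> state \<Rightarrow> nat \<Rightarrow> real" where
  "GREEDY pm fm S 0 = backlog S"
| "GREEDY pm fm S (Suc t) =
     (SUP m \<in> filler_moves pm S. GREEDY pm fm (greedy_empty fm (fst m) (snd m)) t)"

end

theory Submission
  imports Defs "HOL-Combinatorics.Permutations"
begin


lemma dec_mono: "x \<le> y \<Longrightarrow> dec fm x \<le> dec fm y"
  by (cases fm) auto
lemma dec_ge: "x - 1 \<le> dec fm x"
  by (cases fm) auto
lemma dec_le_max: "dec fm x \<le> max 0 x"
  by (cases fm) auto
lemma dec_dec: "dec fm (dec fm x) \<le> dec fm x"
  by (cases fm) auto
lemma dec_plus1: "x \<le> dec fm (x + 1)"
  by (cases fm) auto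
lemma dec_cases: "dec fm x + 1 = x \<or> (fm = NonNeg \<and> x < 1 \<and> dec fm x = 0)"
  by (cases fm) auto
lemma dec_plus1_cases: "dec fm x + 1 = dec fm (x + 1) \<or> (fm = NonNeg \<and> x < 1 \<and> dec fm x = 0)"
  by (cases fm) auto
lemma dec_NonNeg_ge0: "fm = NonNeg \<Longrightarrow> 0 \<le> dec fm x"
  by auto

definition empt :: "fill_mode \<Rightarrow> real list \<Rightarrow> nat set \<Rightarrow> real list" where
  "empt fm xs I = map (\<lambda>i. if i \<in> I then dec fm (xs ! i) else xs ! i) [0..<length xs]"

lemma length_empt[simp]: "length (empt fm xs I) = length xs"
  by (simp add: empt_def)
lemma nth_empt: "i < length xs \<Longrightarrow> empt fm xs I ! i = (if i \<in> I then dec fm (xs ! i) else xs ! i)"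
  by (simp add: empt_def)

definition Inc :: "state \<Rightarrow> state \<Rightarrow> bool" where
  "Inc S T \<longleftrightarrow> (\<exists>zs i v. i < length zs \<and> zs ! i \<le> v \<and> S = mset zs \<and> T = mset (zs[i := v]))"

definition Sw :: "fill_mode \<Rightarrow> state \<Rightarrow> state \<Rightarrow> bool" where
  "Sw fm S T \<longleftrightarrow> (\<exists>zs i j. i < length zs \<and> j < length zs \<and> i \<noteq> j \<and> dec fm (zs ! j) \<le> zs ! i
     \<and> S = mset zs \<and> T = mset (zs[i := zs ! i + 1, j := dec fm (zs ! j)]))"

definition E :: "fill_mode \<Rightarrow> state \<Rightarrow> state \<Rightarrow> bool" where
  "E fm S T \<longleftrightarrow> Inc S T \<or> Sw fm S T"

abbreviation Estar :: "fill_mode \<Rightarrow> state \<Rightarrow> state \<Rightarrow> bool" where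
  "Estar fm \<equiv> (E fm)\<^sup>*\<^sup>*"

lemma Inc_list: "i < length zs \<Longrightarrow> zs ! i \<le> v \<Longrightarrow> Estar fm (mset zs) (mset (zs[i := v]))"
  unfolding E_def Inc_def by (rule r_into_rtranclp) blast

lemma Sw_list: "i < length zs \<Longrightarrow> j < length zs \<Longrightarrow> i \<noteq> j \<Longrightarrow> zs ! i = a \<Longrightarrow> zs ! j = c
  \<Longrightarrow> dec fm c \<le> a \<Longrightarrow> Estar fm (mset zs) (mset (zs[i := a + 1, j := dec fm c]))"
  unfolding E_def Sw_def by (rule r_into_rtranclp) blast

lemma mset_upd2:
  assumes "i < length xs" "j < length xs" "i \<noteq> j"
  shows "mset (xs[i := a, j := b]) = add_mset b (add_mset a (mset xs - {#xs ! i#}) - {#xs ! j#})"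
  using assms by (simp add: mset_update)

lemma perm_two:
  assumes "mset xs = mset zs" "i < length zs" "j < length zs" "i \<noteq> j"
  obtains i' j' where "i' < length xs" "j' < length xs" "i' \<noteq> j'" "xs ! i' = zs ! i" "xs ! j' = zs ! j"
proof -
  obtain p where p: "p permutes {..<length zs}" "permute_list p zs = xs"
    using mset_eq_permutation[OF assms(1)] by blast
  have len: "length xs = length zs" using p(2) by auto
  define i' where "i' = inv p i"
  define j' where "j' = inv p j"
  have pi: "p i' = i" "p j' = j" unfolding i'_def j'_def using permutes_inverses(1)[OF p(1)] by auto
  have ii: "i' < length zs" "j' < length zs"
    using permutes_in_image[OF permutes_inv[OF p(1)]] assms(2,3) unfolding i'_def j'_def by auto
  have "i' \<noteq> j'" using pi assms(4) by auto
  moreover have "xs ! i' = zs ! i" "xs ! j' = zs ! j"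
    using permute_list_nth[OF p(1)] ii pi p(2) by metis+
  ultimately show ?thesis using that ii len by auto
qed

lemma Inc_elim:
  assumes "Inc S T" "mset xs = S"
  shows "\<exists>i v. i < length xs \<and> xs ! i \<le> v \<and> T = mset (xs[i := v])"
proof -
  obtain zs i v where z: "i < length zs" "zs ! i \<le> v" "S = mset zs" "T = mset (zs[i := v])"
    using assms(1) unfolding Inc_def by blast
  have "mset xs = mset zs" using assms(2) z(3) by simp
  then obtain i' where i': "i' < length xs" "xs ! i' = zs ! i"
    using z(1) by (metis in_set_conv_nth mset_eq_setD nth_mem)
  have "mset (xs[i' := v]) = mset (zs[i := v])"
    using i' z(1) \<open>mset xs = mset zs\<close> by (simp add: mset_update)
  then show ?thesis using i' z by metis
qed

lemma Sw_elim:
  assumes "Sw fm S T" "mset xs = S"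
  shows "\<exists>i j. i < length xs \<and> j < length xs \<and> i \<noteq> j \<and> dec fm (xs ! j) \<le> xs ! i
     \<and> T = mset (xs[i := xs ! i + 1, j := dec fm (xs ! j)])"
proof -
  obtain zs i j where z: "i < length zs" "j < length zs" "i \<noteq> j" "dec fm (zs ! j) \<le> zs ! i"
     "S = mset zs" "T = mset (zs[i := zs ! i + 1, j := dec fm (zs ! j)])"
    using assms(1) unfolding Sw_def by blast
  have m: "mset xs = mset zs" using assms(2) z(5) by simp
  obtain i' j' where ij: "i' < length xs" "j' < length xs" "i' \<noteq> j'" "xs ! i' = zs ! i" "xs ! j' = zs ! j"
    using perm_two[OF m z(1-3)] by blast
  have "mset (xs[i' := xs ! i' + 1, j' := dec fm (xs ! j')]) = mset (zs[i := zs ! i + 1, j := dec fm (zs ! j)])"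
    using ij z(1-3) m by (simp add: mset_upd2)
  then show ?thesis using ij z by metis
qed



lemma E_size: "E fm S T \<Longrightarrow> size T = size S"
proof -
  assume "E fm S T"
  obtain xs where xs: "mset xs = S" using ex_mset by blast
  show ?thesis
    using \<open>E fm S T\<close> unfolding E_def
  proof
    assume "Inc S T"
    then obtain i v where "i < length xs" "T = mset (xs[i := v])" using Inc_elim[OF _ xs] by blast
    then show ?thesis using xs by auto
  next
    assume "Sw fm S T"
    then obtain i j where "T = mset (xs[i := xs ! i + 1, j := dec fm (xs ! j)])"
      using Sw_elim[OF _ xs] by blast
    then show ?thesis using xs by auto
  qed
qed

lemma Estar_size: "Estar fm S T \<Longrightarrow> size T = size S"
  by (induction rule: rtranclp_induct) (auto dest: E_size)

lemma mset_empt_perm: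
  assumes p: "p permutes {..<length xs}" and ys: "ys = permute_list p xs" and I: "I \<subseteq> {..<length xs}"
  shows "mset (empt fm ys I) = mset (empt fm xs (p ` I))"
proof -
  define h where "h k = (if k \<in> p ` I then dec fm (xs ! k) else xs ! k)" for k
  have inj: "inj p" using p by (rule permutes_inj)
  have "empt fm ys I = map h (map p [0..<length xs])"
    unfolding empt_def h_def ys
    by (auto simp: permute_list_nth[OF p] inj_image_mem_iff[OF inj])
  also have "map p [0..<length xs] = permute_list p [0..<length xs]"
    using permutes_in_image[OF p] by (auto simp: permute_list_def)
  finally have "mset (empt fm ys I) = image_mset h (mset (permute_list p [0..<length xs]))"
    by simp
  also have "\<dots> = image_mset h (mset [0..<length xs])"
    using p by (subst mset_permute_list) auto
  also have "\<dots> = mset (empt fm xs (p ` I))"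
    unfolding empt_def h_def by (simp add: mset_map)
  finally show ?thesis .
qed

lemma EM_repr:
  "emptier_moves fm (mset xs) p = {mset (empt fm xs I) | I. I \<subseteq> {..<length xs} \<and> card I = p}"
proof (intro set_eqI iffI)
  fix Q assume "Q \<in> emptier_moves fm (mset xs) p"
  then obtain ys I where y: "mset ys = mset xs" "I \<subseteq> {..<length ys}" "card I = p"
    "Q = mset (empt fm ys I)"
    unfolding emptier_moves_def empt_def by blast
  obtain q where q: "q permutes {..<length xs}" "permute_list q xs = ys"
    using mset_eq_permutation[OF y(1)] by blast
  have len: "length ys = length xs" using q(2) by auto
  have "Q = mset (empt fm xs (q ` I))"
    using mset_empt_perm[OF q(1) q(2)[symmetric]] y len by auto
  moreover have "q ` I \<subseteq> {..<length xs}" using permutes_in_image[OF q(1)] y(2) len by auto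
  moreover have "card (q ` I) = p"
    using y(3) card_image inj_on_subset[OF permutes_inj[OF q(1)]] by (metis subset_UNIV)
  ultimately show "Q \<in> {mset (empt fm xs I) | I. I \<subseteq> {..<length xs} \<and> card I = p}" by blast
next
  fix Q assume "Q \<in> {mset (empt fm xs I) | I. I \<subseteq> {..<length xs} \<and> card I = p}"
  then show "Q \<in> emptier_moves fm (mset xs) p"
    unfolding emptier_moves_def empt_def by blast
qed

lemma sum_list_upd: "k < length xs \<Longrightarrow> sum_list (xs[k := x]) = sum_list xs + x - xs ! k"
  for xs :: "real list"
  by (induction xs arbitrary: k) (auto split: nat.split)

lemma map2_upd: "i < length xs \<Longrightarrow> length as = length xs \<Longrightarrow>
   map2 (+) (xs[i := v]) as = (map2 (+) xs as)[i := v + as ! i]"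
  by (rule nth_equalityI) (auto simp: nth_list_update)

lemma map2_upd2: "i < length as \<Longrightarrow> length as = length xs \<Longrightarrow>
   map2 (+) xs (as[i := v]) = (map2 (+) xs as)[i := xs ! i + v]"
  by (rule nth_equalityI) (auto simp: nth_list_update)

lemma filler_intro: "mset ys = Y \<Longrightarrow> length bs = length ys \<Longrightarrow> \<forall>b\<in>set bs. 0 \<le> b \<and> b \<le> 1
  \<Longrightarrow> sum_list bs = real p \<Longrightarrow> p \<in> procs pm (size Y) \<Longrightarrow> (mset (map2 (+) ys bs), p) \<in> filler_moves pm Y"
  unfolding filler_moves_def by blast

lemma fill_E:
  assumes e: "E fm X Y" and m: "(Z, p) \<in> filler_moves pm X"
  shows "\<exists>Z'. (Z', p) \<in> filler_moves pm Y \<and> Estar fm Z Z'"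
proof -
  obtain xs as where f: "Z = mset (map2 (+) xs as)" "mset xs = X" "length as = length xs"
    "\<forall>a\<in>set as. 0 \<le> a \<and> a \<le> 1" "sum_list as = real p" "p \<in> procs pm (size X)"
    using m unfolding filler_moves_def by blast
  have sz: "size Y = size X" using E_size[OF e] .
  define zs where "zs = map2 (+) xs as"
  have lz: "length zs = length xs" using f(3) by (simp add: zs_def)
  have zn: "k < length xs \<Longrightarrow> zs ! k = xs ! k + as ! k" for k using f(3) by (simp add: zs_def)
  have asr: "k < length xs \<Longrightarrow> 0 \<le> as ! k \<and> as ! k \<le> 1" for k using f(3,4) nth_mem by metis
  from e have "Inc X Y \<or> Sw fm X Y" unfolding E_def .
  then show ?thesis
  proof
    assume "Inc X Y"
    then obtain i v where iv: "i < length xs" "xs ! i \<le> v" "Y = mset (xs[i := v])"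
      using Inc_elim[OF _ f(2)] by blast
    have "(mset (map2 (+) (xs[i := v]) as), p) \<in> filler_moves pm Y"
      using filler_intro[of "xs[i := v]" Y as p pm] f iv sz by auto
    moreover have "Estar fm Z (mset (map2 (+) (xs[i := v]) as))"
      unfolding f(1) map2_upd[OF iv(1) f(3)]
      using Inc_list[of i zs "v + as ! i"] iv lz zn by (simp add: zs_def)
    ultimately show ?thesis by blast
  next
    assume "Sw fm X Y"
    then obtain i j where ij: "i < length xs" "j < length xs" "i \<noteq> j" "dec fm (xs ! j) \<le> xs ! i"
      "Y = mset (xs[i := xs ! i + 1, j := dec fm (xs ! j)])"
      using Sw_elim[OF _ f(2)] by blast
    define a where "a = xs ! i"
    define c where "c = xs ! j"
    define ys where "ys = xs[i := a + 1, j := dec fm c]"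
    have Yys: "Y = mset ys" using ij(5) by (simp add: ys_def a_def c_def)
    have ca: "c \<le> a + 1" using dec_ge[of c fm] ij(4) unfolding a_def c_def by linarith
    show ?thesis
    proof (cases "c + as ! j \<le> a + as ! i + 1")
      case True
      have "(mset (map2 (+) ys as), p) \<in> filler_moves pm Y"
        using filler_intro[of ys Y as p pm] f Yys sz by (auto simp: ys_def)
      moreover have "Estar fm Z (mset (map2 (+) ys as))"
      proof -
        have eq: "map2 (+) ys as = zs[i := a + as ! i + 1, j := dec fm c + as ! j]"
          unfolding ys_def zs_def using ij f(3)
          by (intro nth_equalityI) (auto simp: nth_list_update)
        have d1: "dec fm (c + as ! j) \<le> a + as ! i"
        proof (cases fm)
          case NonNeg
          have "0 \<le> a" using ij(4) NonNeg unfolding a_def by (metis dec_NonNeg_ge0 order_trans)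
          then show ?thesis using True NonNeg asr[OF ij(1)] by auto
        qed (use True in auto)
        have d2: "dec fm (c + as ! j) \<le> dec fm c + as ! j"
          using asr[OF ij(2)] by (cases fm) auto
        have s1: "Estar fm (mset zs) (mset (zs[i := (a + as ! i) + 1, j := dec fm (c + as ! j)]))"
          using Sw_list[of i zs j "a + as ! i" "c + as ! j" fm] ij lz zn d1 a_def c_def by auto
        have s2: "Estar fm (mset (zs[i := (a + as ! i) + 1, j := dec fm (c + as ! j)]))
            (mset ((zs[i := (a + as ! i) + 1, j := dec fm (c + as ! j)])[j := dec fm c + as ! j]))"
          using Inc_list[of j "zs[i := (a + as ! i) + 1, j := dec fm (c + as ! j)]" "dec fm c + as ! j" fm] ij lz d2
          by (simp add: nth_list_update)
        show ?thesis using s1 s2 eq f(1) unfolding zs_def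
          by (simp add: add.commute add.left_commute)
      qed
      ultimately show ?thesis by blast
    next
      case False
      define \<beta> where "\<beta> = c + as ! j - a - 1"
      define \<sigma> where "\<sigma> = as ! i + as ! j"
      define bs where "bs = as[i := \<beta>, j := \<sigma> - \<beta>]"
      have b1: "0 \<le> \<beta>" "\<beta> \<le> 1" using False ca asr[OF ij(1)] asr[OF ij(2)] unfolding \<beta>_def by auto
      have b2: "0 \<le> \<sigma> - \<beta>" "\<sigma> - \<beta> \<le> 1"
        using False ca asr[OF ij(1)] asr[OF ij(2)] unfolding \<beta>_def \<sigma>_def by auto
      have lb: "length bs = length xs" using f(3) by (simp add: bs_def)
      have bsr: "\<forall>b\<in>set bs. 0 \<le> b \<and> b \<le> 1"
      proof
        fix b assume "b \<in> set bs"
        then have "b \<in> insert (\<sigma> - \<beta>) (insert \<beta> (set as))"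
          unfolding bs_def by (meson set_update_subset_insert subsetD insert_mono)
        then show "0 \<le> b \<and> b \<le> 1" using b1 b2 f(4) by auto
      qed
      have sb: "sum_list bs = real p"
        using f(3,5) ij(1-3) by (simp add: bs_def sum_list_upd nth_list_update \<sigma>_def)
      have "(mset (map2 (+) ys bs), p) \<in> filler_moves pm Y"
        using filler_intro[of ys Y bs p pm] f Yys sz lb bsr sb by (auto simp: ys_def)
      moreover have "Estar fm Z (mset (map2 (+) ys bs))"
      proof -
        have eq: "map2 (+) ys bs = zs[i := c + as ! j, j := dec fm c + \<sigma> - \<beta>]"
          unfolding ys_def zs_def bs_def using ij f(3)
          by (intro nth_equalityI) (auto simp: nth_list_update \<beta>_def)
        have sw: "mset zs = mset (zs[j := zs ! i, i := zs ! j])"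
          using mset_swap ij lz by metis
        have sw2: "zs[j := zs ! i, i := zs ! j] = zs[i := c + as ! j, j := a + as ! i]"
          using ij zn list_update_swap a_def c_def by metis
        have le: "a + as ! i \<le> dec fm c + \<sigma> - \<beta>"
          using dec_ge[of c fm] unfolding \<sigma>_def \<beta>_def by linarith
        have s2: "Estar fm (mset (zs[i := c + as ! j, j := a + as ! i]))
            (mset ((zs[i := c + as ! j, j := a + as ! i])[j := dec fm c + \<sigma> - \<beta>]))"
          using Inc_list[of j "zs[i := c + as ! j, j := a + as ! i]" "dec fm c + \<sigma> - \<beta>" fm] ij lz le
          by (simp add: nth_list_update)
        show ?thesis using s2 sw sw2 eq f(1) unfolding zs_def by simp
      qed
      ultimately show ?thesis by blast
    qed
  qed
qed



lemma empt_upd: "i < length zs \<Longrightarrow>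
   empt fm (zs[i := v]) J = (empt fm zs J)[i := (if i \<in> J then dec fm v else v)]"
  by (rule nth_equalityI) (auto simp: nth_empt nth_list_update)

lemma EM_intro: "I \<subseteq> {..<length xs} \<Longrightarrow> card I = p \<Longrightarrow> mset (empt fm xs I) \<in> emptier_moves fm (mset xs) p"
  unfolding EM_repr by blast

lemma empty_E:
  assumes e: "E fm P Q" and q: "Q' \<in> emptier_moves fm Q p"
  shows "\<exists>P' \<in> emptier_moves fm P p. Estar fm P' Q'"
proof -
  obtain zs where zs: "mset zs = P" using ex_mset by blast
  from e have "Inc P Q \<or> Sw fm P Q" unfolding E_def .
  then show ?thesis
  proof
    assume "Inc P Q"
    then obtain i v where iv: "i < length zs" "zs ! i \<le> v" "Q = mset (zs[i := v])"
      using Inc_elim[OF _ zs] by blast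
    obtain J where J: "J \<subseteq> {..<length zs}" "card J = p" "Q' = mset (empt fm (zs[i := v]) J)"
      using q unfolding iv(3) EM_repr by auto
    have "mset (empt fm zs J) \<in> emptier_moves fm P p" using EM_intro J zs by blast
    moreover have "Estar fm (mset (empt fm zs J)) Q'"
      unfolding J(3) empt_upd[OF iv(1)]
      using Inc_list[of i "empt fm zs J" "if i \<in> J then dec fm v else v" fm] iv dec_mono
      by (auto simp: nth_empt)
    ultimately show ?thesis by blast
  next
    assume "Sw fm P Q"
    then obtain i j where ij: "i < length zs" "j < length zs" "i \<noteq> j" "dec fm (zs ! j) \<le> zs ! i"
      "Q = mset (zs[i := zs ! i + 1, j := dec fm (zs ! j)])"
      using Sw_elim[OF _ zs] by blast
    define \<rho> where "\<rho> = zs ! i"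
    define \<gamma> where "\<gamma> = zs ! j"
    have cond: "dec fm \<gamma> \<le> \<rho>" using ij(4) by (simp add: \<rho>_def \<gamma>_def)
    obtain J where J: "J \<subseteq> {..<length zs}" "card J = p"
      "Q' = mset (empt fm (zs[i := \<rho> + 1, j := dec fm \<gamma>]) J)"
      using q unfolding ij(5) EM_repr \<rho>_def \<gamma>_def by auto
    define L where "L = empt fm zs J"
    have lL: "length L = length zs" by (simp add: L_def)
    have Li: "L ! i = (if i \<in> J then dec fm \<rho> else \<rho>)" using ij(1) by (simp add: L_def nth_empt \<rho>_def)
    have Lj: "L ! j = (if j \<in> J then dec fm \<gamma> else \<gamma>)" using ij(2) by (simp add: L_def nth_empt \<gamma>_def)
    have QL: "Q' = mset (L[i := (if i \<in> J then dec fm (\<rho> + 1) else \<rho> + 1),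
                         j := (if j \<in> J then dec fm (dec fm \<gamma>) else dec fm \<gamma>)])"
      unfolding J(3) L_def using ij(1-3)
      by (simp add: empt_upd)
    have PL: "mset L \<in> emptier_moves fm P p" using EM_intro J zs L_def by blast
    show ?thesis
    proof (cases "i \<in> J")
      case iJ: True
      show ?thesis
      proof (cases "j \<in> J")
        case jJ: True
        have Q2: "Q' = mset (L[i := dec fm (\<rho> + 1), j := dec fm (dec fm \<gamma>)])"
          using QL iJ jJ by simp
        consider (a) "dec fm \<rho> + 1 = dec fm (\<rho> + 1)" | (b) "fm = NonNeg" "\<rho> < 1" "dec fm \<rho> = 0"
          using dec_plus1_cases by blast
        then show ?thesis
        proof cases
          case a
          have "Estar fm (mset L) (mset (L[i := dec fm \<rho> + 1, j := dec fm (dec fm \<gamma>)]))"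
            using Sw_list[of i L j "dec fm \<rho>" "dec fm \<gamma>" fm] ij lL Li Lj iJ jJ dec_mono[OF cond]
            by auto
          then show ?thesis using PL Q2 a by auto
        next
          case b
          have sw: "mset L = mset (L[j := L ! i, i := L ! j])"
            using mset_swap ij lL by metis
          have sw2: "L[j := L ! i, i := L ! j] = L[i := dec fm \<gamma>, j := 0]"
            using ij Li Lj iJ jJ b list_update_swap by metis
          have le1: "dec fm \<gamma> \<le> dec fm (\<rho> + 1)" using cond b by auto
          have le2: "0 \<le> dec fm (dec fm \<gamma>)" using b by auto
          have s1: "Estar fm (mset (L[i := dec fm \<gamma>, j := 0])) (mset ((L[i := dec fm \<gamma>, j := 0])[i := dec fm (\<rho> + 1)]))"
            using Inc_list[of i "L[i := dec fm \<gamma>, j := 0]" "dec fm (\<rho> + 1)" fm] ij lL le1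
            by (simp add: nth_list_update)
          have s2: "Estar fm (mset ((L[i := dec fm \<gamma>, j := 0])[i := dec fm (\<rho> + 1)]))
             (mset (((L[i := dec fm \<gamma>, j := 0])[i := dec fm (\<rho> + 1)])[j := dec fm (dec fm \<gamma>)]))"
            using Inc_list[of j "(L[i := dec fm \<gamma>, j := 0])[i := dec fm (\<rho> + 1)]" "dec fm (dec fm \<gamma>)" fm] ij lL le2
            by (simp add: nth_list_update)
          have eq: "((L[i := dec fm \<gamma>, j := 0])[i := dec fm (\<rho> + 1)])[j := dec fm (dec fm \<gamma>)]
              = L[i := dec fm (\<rho> + 1), j := dec fm (dec fm \<gamma>)]"
            using ij(3) by (metis list_update_overwrite list_update_swap)
          have "Estar fm (mset L) Q'"
            using s1 s2 sw sw2 eq Q2 by (metis rtranclp_trans)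
          then show ?thesis using PL by blast
        qed
      next
        case jJ: False
        define J2 where "J2 = insert j (J - {i})"
        have J2s: "J2 \<subseteq> {..<length zs}" using J(1) ij(2) by (auto simp: J2_def)
        have fin: "finite J" using J(1) finite_subset by blast
        have "p > 0" using fin iJ J(2) card_gt_0_iff by blast
        then have J2c: "card J2 = p" using J(2) iJ jJ fin by (simp add: J2_def card_insert_if)
        define L2 where "L2 = empt fm zs J2"
        have L2eq: "L2 = L[i := \<rho>, j := dec fm \<gamma>]"
          unfolding L2_def L_def J2_def using ij(1-3)
          by (intro nth_equalityI) (auto simp: nth_empt nth_list_update \<rho>_def \<gamma>_def)
        have P2: "mset L2 \<in> emptier_moves fm P p" using EM_intro J2s J2c zs L2_def by blast
        have Q2: "Q' = mset (L2[i := dec fm (\<rho> + 1)])"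
        proof -
          have "L[i := dec fm (\<rho> + 1), j := dec fm \<gamma>] = L2[i := dec fm (\<rho> + 1)]"
            unfolding L2eq using ij(3) by (metis list_update_overwrite list_update_swap)
          then show ?thesis using QL iJ jJ by simp
        qed
        have "Estar fm (mset L2) Q'"
          using Inc_list[of i L2 "dec fm (\<rho> + 1)" fm] Q2 ij lL L2eq dec_plus1[of \<rho> fm]
          by (simp add: nth_list_update)
        then show ?thesis using P2 by blast
      qed
    next
      case iJ: False
      show ?thesis
      proof (cases "j \<in> J")
        case jJ: True
        have Q2: "Q' = mset (L[i := \<rho> + 1, j := dec fm (dec fm \<gamma>)])"
          using QL iJ jJ by simp
        have c2: "dec fm (dec fm \<gamma>) \<le> \<rho>" using dec_dec[of fm \<gamma>] cond by linarith
        have "Estar fm (mset L) Q'"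
          using Sw_list[of i L j \<rho> "dec fm \<gamma>" fm] ij lL Li Lj iJ jJ c2 Q2 by auto
        then show ?thesis using PL by blast
      next
        case jJ: False
        have Q2: "Q' = mset (L[i := \<rho> + 1, j := dec fm \<gamma>])"
          using QL iJ jJ by simp
        have "Estar fm (mset L) Q'"
          using Sw_list[of i L j \<rho> \<gamma> fm] ij lL Li Lj iJ jJ cond Q2 by auto
        then show ?thesis using PL by blast
      qed
    qed
  qed
qed

lemma Max_le_Max:
  fixes A B :: "real set"
  assumes "finite A" "A \<noteq> {}" "finite B" "\<forall>x\<in>A. \<exists>y\<in>B. x \<le> y"
  shows "Max A \<le> Max B"
proof -
  obtain y where "y \<in> B" "Max A \<le> y" using assms Max_in by blast
  then show ?thesis using assms(3) Max_ge order_trans by blast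
qed

lemma backlog_list_le:
  assumes "zs \<noteq> []" "\<forall>k<length zs. \<exists>y\<in>set ws. zs ! k \<le> y"
  shows "backlog (mset zs) \<le> backlog (mset ws)"
  unfolding backlog_def using assms
  by (intro Max_le_Max) (auto simp: in_set_conv_nth)

lemma backlog_E:
  assumes e: "E fm P Q" shows "backlog P \<le> backlog Q"
proof -
  obtain zs where zs: "mset zs = P" using ex_mset by blast
  from e have "Inc P Q \<or> Sw fm P Q" unfolding E_def .
  then show ?thesis
  proof
    assume "Inc P Q"
    then obtain i v where iv: "i < length zs" "zs ! i \<le> v" "Q = mset (zs[i := v])"
      using Inc_elim[OF _ zs] by blast
    have "\<forall>k<length zs. \<exists>y\<in>set (zs[i := v]). zs ! k \<le> y"
    proof (intro allI impI)
      fix k assume k: "k < length zs"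
      show "\<exists>y\<in>set (zs[i := v]). zs ! k \<le> y"
      proof (cases "k = i")
        case True then show ?thesis using iv k by (metis length_list_update nth_list_update_eq nth_mem)
      next
        case False then show ?thesis using k by (metis length_list_update nth_list_update_neq nth_mem order_refl)
      qed
    qed
    moreover have "zs \<noteq> []" using iv(1) by auto
    ultimately show ?thesis using zs iv backlog_list_le[of zs "zs[i := v]"] by auto
  next
    assume "Sw fm P Q"
    then obtain i j where ij: "i < length zs" "j < length zs" "i \<noteq> j" "dec fm (zs ! j) \<le> zs ! i"
      "Q = mset (zs[i := zs ! i + 1, j := dec fm (zs ! j)])"
      using Sw_elim[OF _ zs] by blast
    define ws where "ws = zs[i := zs ! i + 1, j := dec fm (zs ! j)]"
    have wi: "ws ! i = zs ! i + 1" using ij by (simp add: ws_def nth_list_update)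
    have ci: "zs ! j \<le> zs ! i + 1" using dec_ge[of "zs ! j" fm] ij(4) by linarith
    have "\<forall>k<length zs. \<exists>y\<in>set ws. zs ! k \<le> y"
    proof (intro allI impI)
      fix k assume k: "k < length zs"
      have iw: "ws ! i \<in> set ws" using ij by (metis length_list_update nth_mem ws_def)
      show "\<exists>y\<in>set ws. zs ! k \<le> y"
      proof (cases "k = i \<or> k = j")
        case True
        have "zs ! i \<le> ws ! i" using wi by simp
        then show ?thesis using True iw ci wi by (metis order_trans)
      next
        case False
        then have "ws ! k = zs ! k" by (simp add: ws_def nth_list_update)
        then show ?thesis using k by (metis length_list_update nth_mem order_refl ws_def)
      qed
    qed
    moreover have "zs \<noteq> []" using ij(1) by auto
    ultimately show ?thesis using zs ij backlog_list_le[of zs ws] unfolding ws_def by auto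
  qed
qed

lemma backlog_Estar: "Estar fm P Q \<Longrightarrow> backlog P \<le> backlog Q"
  by (induction rule: rtranclp_induct) (auto dest: backlog_E)

lemma fill_Estar:
  assumes "Estar fm X Y" "(Z, p) \<in> filler_moves pm X"
  shows "\<exists>Z'. (Z', p) \<in> filler_moves pm Y \<and> Estar fm Z Z'"
  using assms
proof (induction arbitrary: Z rule: rtranclp_induct)
  case base then show ?case by blast
next
  case (step Y W)
  obtain Z1 where "(Z1, p) \<in> filler_moves pm Y" "Estar fm Z Z1" using step by blast
  moreover obtain Z2 where "(Z2, p) \<in> filler_moves pm W" "Estar fm Z1 Z2"
    using fill_E[OF step(2) \<open>(Z1, p) \<in> filler_moves pm Y\<close>] by blast
  ultimately show ?case by (meson rtranclp_trans)
qed

lemma empty_Estar: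
  assumes "Estar fm P Q" "Q' \<in> emptier_moves fm Q p"
  shows "\<exists>P' \<in> emptier_moves fm P p. Estar fm P' Q'"
  using assms
proof (induction arbitrary: Q' rule: rtranclp_induct)
  case base then show ?case by blast
next
  case (step Y W)
  obtain Y' where "Y' \<in> emptier_moves fm Y p" "Estar fm Y' Q'" using empty_E[OF step(2) step(4)] by blast
  moreover obtain P' where "P' \<in> emptier_moves fm P p" "Estar fm P' Y'" using step(3) calculation(1) by blast
  ultimately show ?case by (meson rtranclp_trans)
qed



lemma filler_props:
  assumes "(Z, p) \<in> filler_moves pm X"
  shows "size Z = size X" "p \<in> procs pm (size X)"
    "size X \<ge> 1 \<Longrightarrow> backlog Z \<le> backlog X + 1"
proof -
  obtain xs as where f: "Z = mset (map2 (+) xs as)" "mset xs = X" "length as = length xs"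
    "\<forall>a\<in>set as. 0 \<le> a \<and> a \<le> 1" "sum_list as = real p" "p \<in> procs pm (size X)"
    using assms unfolding filler_moves_def by blast
  show "size Z = size X" using f by auto
  show "p \<in> procs pm (size X)" using f by auto
  assume "size X \<ge> 1"
  then have ne: "xs \<noteq> []" using f(2) by auto
  have "\<forall>z\<in>set (map2 (+) xs as). z \<le> Max (set xs) + 1"
  proof
    fix z assume "z \<in> set (map2 (+) xs as)"
    then obtain k where k: "k < length xs" "z = xs ! k + as ! k" using f(3)
      by (auto simp: in_set_conv_nth)
    have "as ! k \<le> 1" using f(3,4) k(1) nth_mem by metis
    moreover have "xs ! k \<le> Max (set xs)" using k(1) by simp
    ultimately show "z \<le> Max (set xs) + 1" using k(2) by linarith
  qed
  moreover have "set (map2 (+) xs as) \<noteq> {}" using ne f(3) by (cases xs; cases as) auto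
  ultimately show "backlog Z \<le> backlog X + 1"
    unfolding backlog_def f(1) f(2)[symmetric] by (simp add: Max.boundedI)
qed

lemma filler_nonempty:
  assumes "size X = n" "p \<in> procs pm n" "p \<le> n"
  shows "\<exists>Z. (Z, p) \<in> filler_moves pm X"
proof -
  obtain xs where xs: "mset xs = X" using ex_mset by blast
  define as :: "real list" where "as = replicate p 1 @ replicate (n - p) 0"
  have "length as = length xs" using xs assms by (auto simp: as_def)
  moreover have "\<forall>a\<in>set as. 0 \<le> a \<and> a \<le> 1" by (auto simp: as_def)
  moreover have "sum_list as = real p" by (simp add: as_def sum_list_replicate)
  ultimately show ?thesis using filler_intro[of xs X as p pm] xs assms by auto
qed

lemma EM_image: "emptier_moves fm (mset xs) p = (\<lambda>I. mset (empt fm xs I)) ` {I. I \<subseteq> {..<length xs} \<and> card I = p}"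
  unfolding EM_repr by blast

lemma emptier_finite: "finite (emptier_moves fm Z p)"
proof -
  obtain xs where xs: "mset xs = Z" using ex_mset by blast
  have "finite {I. I \<subseteq> {..<length xs} \<and> card I = p}"
    by (rule finite_subset[of _ "Pow {..<length xs}"]) auto
  then show ?thesis unfolding xs[symmetric] EM_image by blast
qed

lemma emptier_size: "Q \<in> emptier_moves fm Z p \<Longrightarrow> size Q = size Z"
proof -
  assume "Q \<in> emptier_moves fm Z p"
  obtain xs where xs: "mset xs = Z" using ex_mset by blast
  then show ?thesis using \<open>Q \<in> emptier_moves fm Z p\<close> unfolding xs[symmetric] EM_repr by auto
qed

lemma emptier_nonempty: "p \<le> size Z \<Longrightarrow> emptier_moves fm Z p \<noteq> {}"
proof -
  assume p: "p \<le> size Z"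
  obtain xs where xs: "mset xs = Z" using ex_mset by blast
  have "mset (empt fm xs {..<p}) \<in> emptier_moves fm Z p"
    using EM_intro[of "{..<p}" xs p fm] p xs by auto
  then show ?thesis by blast
qed

lemma emptier_backlog:
  assumes "Q \<in> emptier_moves fm Z p" "Z \<noteq> {#}"
  shows "backlog Q \<le> max 0 (backlog Z)"
proof -
  obtain xs where xs: "mset xs = Z" using ex_mset by blast
  obtain I where I: "Q = mset (empt fm xs I)" using assms(1) unfolding xs[symmetric] EM_repr by auto
  have ne: "xs \<noteq> []" using assms(2) xs by auto
  have "\<forall>z\<in>set (empt fm xs I). z \<le> max 0 (Max (set xs))"
  proof
    fix z assume "z \<in> set (empt fm xs I)"
    then obtain k where k: "k < length xs" "z = empt fm xs I ! k" by (auto simp: in_set_conv_nth)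
    have "xs ! k \<le> Max (set xs)" using k(1) by simp
    then have m: "max 0 (xs ! k) \<le> max 0 (Max (set xs))" by simp
    have "z \<le> max 0 (xs ! k)" using k dec_le_max[of fm "xs ! k"] by (auto simp: nth_empt)
    then show "z \<le> max 0 (Max (set xs))" using m by linarith
  qed
  moreover have "set (empt fm xs I) \<noteq> {}" using ne by (metis length_empt length_0_conv set_empty)
  ultimately show ?thesis unfolding backlog_def I xs[symmetric] by (simp add: Max.boundedI)
qed

lemma OPT_bound:
  assumes "size S = n" "n \<ge> 1" "procs pm n \<noteq> {}" "\<forall>p\<in>procs pm n. p \<le> n"
  shows "OPT pm fm S t \<le> max 0 (backlog S) + real t"
  using assms(1)
proof (induction t arbitrary: S)
  case 0 then show ?case by simp
next
  case (Suc t)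
  obtain p0 where p0: "p0 \<in> procs pm n" using assms(3) by blast
  obtain Z0 where "(Z0, p0) \<in> filler_moves pm S" using filler_nonempty[OF Suc.prems p0] assms(4) p0 by blast
  then have Fne: "filler_moves pm S \<noteq> {}" by blast
  show ?case
    unfolding OPT.simps
  proof (rule cSUP_least[OF Fne])
    fix m assume m: "m \<in> filler_moves pm S"
    obtain Z p where mz: "m = (Z, p)" by (cases m)
    have zp: "size Z = n" "p \<in> procs pm n" "backlog Z \<le> backlog S + 1"
      using filler_props[of Z p pm S] m mz Suc.prems assms(2) by auto
    have "p \<le> size Z" using zp assms(4) by auto
    then obtain Q where Q: "Q \<in> emptier_moves fm Z p" using emptier_nonempty by blast
    have "(INF S''\<in>emptier_moves fm (fst m) (snd m). OPT pm fm S'' t) \<le> OPT pm fm Q t"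
      using Q mz by (intro cINF_lower bdd_below_finite finite_imageI emptier_finite) auto
    also have "\<dots> \<le> max 0 (backlog Q) + real t"
      using Suc.IH[of Q] emptier_size[OF Q] zp by auto
    also have "\<dots> \<le> max 0 (backlog S) + real (Suc t)"
    proof -
      have "Z \<noteq> {#}" using zp assms(2) by auto
      then have "backlog Q \<le> max 0 (backlog Z)" using emptier_backlog[OF Q] by blast
      then show ?thesis using zp(3) by auto
    qed
    finally show "(INF S''\<in>emptier_moves fm (fst m) (snd m). OPT pm fm S'' t) \<le> max 0 (backlog S) + real (Suc t)" .
  qed
qed

lemma OPT_mono:
  assumes "Estar fm X Y" "size X = n" "n \<ge> 1" "procs pm n \<noteq> {}" "\<forall>p\<in>procs pm n. p \<le> n"
  shows "OPT pm fm X t \<le> OPT pm fm Y t"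
  using assms(1,2)
proof (induction t arbitrary: X Y)
  case 0 then show ?case using backlog_Estar by simp
next
  case (Suc t)
  have sY: "size Y = n" using Estar_size[OF Suc.prems(1)] Suc.prems(2) by simp
  obtain p0 where p0: "p0 \<in> procs pm n" using assms(4) by blast
  obtain Z0 where "(Z0, p0) \<in> filler_moves pm X" using filler_nonempty[OF Suc.prems(2) p0] assms(5) p0 by blast
  then have Fne: "filler_moves pm X \<noteq> {}" by blast
  define f where "f m = (INF S''\<in>emptier_moves fm (fst m) (snd m). OPT pm fm S'' t)" for m
  have bddY: "bdd_above (f ` filler_moves pm Y)"
  proof (rule bdd_aboveI2)
    fix m assume m: "m \<in> filler_moves pm Y"
    obtain Z p where mz: "m = (Z, p)" by (cases m)
    have zp: "size Z = n" "p \<in> procs pm n" "backlog Z \<le> backlog Y + 1"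
      using filler_props[of Z p pm Y] m mz sY assms(3) by auto
    have "p \<le> size Z" using zp assms(5) by auto
    then obtain Q where Q: "Q \<in> emptier_moves fm Z p" using emptier_nonempty by blast
    have "f m \<le> OPT pm fm Q t"
      unfolding f_def using Q mz by (intro cINF_lower bdd_below_finite finite_imageI emptier_finite) auto
    also have "\<dots> \<le> max 0 (backlog Q) + real t"
      using OPT_bound[of Q n pm fm t] emptier_size[OF Q] zp assms(3-5) by auto
    also have "\<dots> \<le> max 0 (backlog Y) + 1 + real t"
    proof -
      have "Z \<noteq> {#}" using zp assms(3) by auto
      then have "backlog Q \<le> max 0 (backlog Z)" using emptier_backlog[OF Q] by blast
      then show ?thesis using zp(3) by auto
    qed
    finally show "f m \<le> max 0 (backlog Y) + 1 + real t" .
  qed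
  have "(SUP m\<in>filler_moves pm X. f m) \<le> (SUP m\<in>filler_moves pm Y. f m)"
  proof (rule cSUP_least[OF Fne])
    fix m assume m: "m \<in> filler_moves pm X"
    obtain Z p where mz: "m = (Z, p)" by (cases m)
    obtain Z' where Z': "(Z', p) \<in> filler_moves pm Y" "Estar fm Z Z'"
      using fill_Estar[OF Suc.prems(1)] m mz by blast
    have zp: "size Z = n" "p \<in> procs pm n"
      using filler_props[of Z p pm X] m mz Suc.prems(2) by auto
    have zp': "size Z' = n" using filler_props[of Z' p pm Y] Z'(1) sY by auto
    have "f m \<le> f (Z', p)"
      unfolding f_def mz fst_conv snd_conv
    proof (rule cINF_greatest)
      show "emptier_moves fm Z' p \<noteq> {}" using emptier_nonempty zp' zp assms(5) by auto
    next
      fix Q' assume Q': "Q' \<in> emptier_moves fm Z' p"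
      obtain P' where P': "P' \<in> emptier_moves fm Z p" "Estar fm P' Q'"
        using empty_Estar[OF Z'(2) Q'] by blast
      have "(INF S''\<in>emptier_moves fm Z p. OPT pm fm S'' t) \<le> OPT pm fm P' t"
        using P'(1) by (intro cINF_lower bdd_below_finite finite_imageI emptier_finite) auto
      also have "\<dots> \<le> OPT pm fm Q' t"
        using Suc.IH[OF P'(2)] emptier_size[OF P'(1)] zp by auto
      finally show "(INF S''\<in>emptier_moves fm Z p. OPT pm fm S'' t) \<le> OPT pm fm Q' t" .
    qed
    also have "\<dots> \<le> (SUP m\<in>filler_moves pm Y. f m)"
      using Z'(1) bddY by (rule cSUP_upper)
    finally show "f m \<le> (SUP m\<in>filler_moves pm Y. f m)" .
  qed
  then show ?case unfolding OPT.simps f_def .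
qed



lemma greedy_chain:
  fixes xs :: "real list"
  assumes T: "T \<subseteq> {..<length xs}" and dom: "\<forall>i\<in>T. \<forall>j<length xs. j \<notin> T \<longrightarrow> xs ! j \<le> xs ! i"
  shows "I \<subseteq> {..<length xs} \<Longrightarrow> card I = card T \<Longrightarrow> Estar fm (mset (empt fm xs T)) (mset (empt fm xs I))"
proof (induction "card (I - T)" arbitrary: I rule: less_induct)
  case less
  have finT: "finite T" using T finite_subset by blast
  have finI: "finite I" using less.prems(1) finite_subset by blast
  show ?case
  proof (cases "I - T = {}")
    case True
    then have "I \<subseteq> T" by blast
    then have "I = T" using card_subset_eq[OF finT] less.prems(2) by blast
    then show ?thesis by simp
  next
    case False
    then obtain g where g: "g \<in> I" "g \<notin> T" by blast
    have "\<not> T \<subseteq> I"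
    proof
      assume "T \<subseteq> I"
      then have "T = I" using card_subset_eq[OF finI] less.prems(2) by metis
      then show False using g by blast
    qed
    then obtain r where r: "r \<in> T" "r \<notin> I" by blast
    define I2 where "I2 = insert r (I - {g})"
    have rg: "r \<noteq> g" using r g by blast
    have I2s: "I2 \<subseteq> {..<length xs}" using less.prems(1) r T by (auto simp: I2_def)
    have "card I > 0" using g finI card_gt_0_iff by blast
    then have I2c: "card I2 = card T" using less.prems(2) finI g r rg by (simp add: I2_def card_insert_if)
    have "I2 - T = (I - T) - {g}" using r by (auto simp: I2_def)
    moreover have "g \<in> I - T" using g by blast
    ultimately have lt: "card (I2 - T) < card (I - T)" using finI by (metis card_Diff1_less finite_Diff)
    have IH: "Estar fm (mset (empt fm xs T)) (mset (empt fm xs I2))"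
      using less.hyps[OF lt I2s I2c] .
    define L where "L = empt fm xs I2"
    have rl: "r < length xs" "g < length xs" using r g T less.prems(1) by auto
    have lL: "length L = length xs" by (simp add: L_def)
    have Lr: "L ! r = dec fm (xs ! r)" using rl by (simp add: L_def nth_empt I2_def)
    have Lg: "L ! g = xs ! g" using rl rg by (simp add: L_def nth_empt I2_def)
    have eqI: "empt fm xs I = L[r := xs ! r, g := dec fm (xs ! g)]"
      unfolding L_def I2_def using rl rg r g
      by (intro nth_equalityI) (auto simp: nth_empt nth_list_update)
    have gr: "xs ! g \<le> xs ! r" using dom r g rl by blast
    have step: "Estar fm (mset L) (mset (empt fm xs I))"
    proof -
      consider (a) "dec fm (xs ! r) + 1 = xs ! r" | (b) "fm = NonNeg" "xs ! r < 1" "dec fm (xs ! r) = 0"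
        using dec_cases by blast
      then show ?thesis
      proof cases
        case a
        have "Estar fm (mset L) (mset (L[r := dec fm (xs ! r) + 1, g := dec fm (xs ! g)]))"
          using Sw_list[of r L g "dec fm (xs ! r)" "xs ! g" fm] rl lL Lr Lg rg dec_mono[OF gr] by auto
        then show ?thesis using a eqI by simp
      next
        case b
        have dg: "dec fm (xs ! g) = 0" using b gr by auto
        have sw: "mset L = mset (L[g := L ! r, r := L ! g])"
          using mset_swap rl lL by metis
        have sw2: "L[g := L ! r, r := L ! g] = L[r := xs ! g, g := 0]"
          using rg Lr Lg b list_update_swap by metis
        have s1: "Estar fm (mset (L[r := xs ! g, g := 0])) (mset ((L[r := xs ! g, g := 0])[r := xs ! r]))"
          using Inc_list[of r "L[r := xs ! g, g := 0]" "xs ! r" fm] rl lL gr rg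
          by (simp add: nth_list_update)
        have eq: "(L[r := xs ! g, g := 0])[r := xs ! r] = L[r := xs ! r, g := dec fm (xs ! g)]"
          using rg dg by (metis list_update_overwrite list_update_swap)
        show ?thesis using s1 sw sw2 eq eqI by simp
      qed
    qed
    show ?thesis using IH step unfolding L_def by (meson rtranclp_trans)
  qed
qed

lemma greedy_props:
  assumes "p \<le> size S"
  shows "greedy_empty fm S p \<in> emptier_moves fm S p"
    "\<And>Q. Q \<in> emptier_moves fm S p \<Longrightarrow> Estar fm (greedy_empty fm S p) Q"
proof -
  define xs where "xs = rev (sorted_list_of_multiset S)"
  have mx: "mset xs = S" by (simp add: xs_def)
  have lx: "length xs = size S" using mx by (metis size_mset)
  have srt: "sorted (rev xs)" by (simp add: xs_def)
  have geq: "greedy_empty fm S p = mset (empt fm xs {..<p})"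
  proof -
    have "map (dec fm) (take p xs) @ drop p xs = empt fm xs {..<p}"
    proof (rule nth_equalityI)
      show "length (map (dec fm) (take p xs) @ drop p xs) = length (empt fm xs {..<p})"
        using assms lx by simp
      fix i assume "i < length (map (dec fm) (take p xs) @ drop p xs)"
      then have i: "i < length xs" using assms lx by simp
      show "(map (dec fm) (take p xs) @ drop p xs) ! i = empt fm xs {..<p} ! i"
        using i assms lx by (cases "i < p") (auto simp: nth_append nth_empt)
    qed
    then show ?thesis unfolding greedy_empty_def Let_def xs_def[symmetric] by simp
  qed
  show "greedy_empty fm S p \<in> emptier_moves fm S p"
    unfolding geq using EM_intro[of "{..<p}" xs p fm] assms lx mx by auto
  fix Q assume "Q \<in> emptier_moves fm S p"
  then obtain I where I: "I \<subseteq> {..<length xs}" "card I = p" "Q = mset (empt fm xs I)"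
    unfolding mx[symmetric] EM_repr by blast
  have dom: "\<forall>i\<in>{..<p}. \<forall>j<length xs. j \<notin> {..<p} \<longrightarrow> xs ! j \<le> xs ! i"
    using sorted_rev_nth_mono[OF srt] by auto
  show "Estar fm (greedy_empty fm S p) Q"
    unfolding geq I(3) using greedy_chain[OF _ dom, of I fm] I assms lx by auto
qed

theorem main:
  fixes pm :: proc_mode and fm :: fill_mode and A :: state and n t :: nat
  assumes "size A = n" and "n \<ge> 1"
    and "\<And>p. pm = Fixed p \<Longrightarrow> 1 \<le> p \<and> p \<le> n"
  shows "GREEDY pm fm A t = OPT pm fm A t"
proof -
  have hne: "procs pm n \<noteq> {}" using assms(2) by (cases pm) auto
  have hp: "\<forall>p\<in>procs pm n. p \<le> n" using assms(3) by (cases pm) auto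
  show ?thesis using assms(1)
  proof (induction t arbitrary: A)
    case 0 then show ?case by simp
  next
    case (Suc t)
    have "\<And>m. m \<in> filler_moves pm A \<Longrightarrow>
       GREEDY pm fm (greedy_empty fm (fst m) (snd m)) t =
       (INF S''\<in>emptier_moves fm (fst m) (snd m). OPT pm fm S'' t)"
    proof -
      fix m assume m: "m \<in> filler_moves pm A"
      obtain Z p where mz: "m = (Z, p)" by (cases m)
      have zp: "size Z = n" "p \<in> procs pm n"
        using filler_props[of Z p pm A] m mz Suc.prems by auto
      have pl: "p \<le> size Z" using zp hp by auto
      note gp = greedy_props[OF pl, where fm=fm]
      have sG: "size (greedy_empty fm Z p) = n" using emptier_size[OF gp(1)] zp by simp
      have "(INF S''\<in>emptier_moves fm Z p. OPT pm fm S'' t) = OPT pm fm (greedy_empty fm Z p) t"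
      proof (rule antisym)
        show "(INF S''\<in>emptier_moves fm Z p. OPT pm fm S'' t) \<le> OPT pm fm (greedy_empty fm Z p) t"
          using gp(1) by (intro cINF_lower bdd_below_finite finite_imageI emptier_finite) auto
        show "OPT pm fm (greedy_empty fm Z p) t \<le> (INF S''\<in>emptier_moves fm Z p. OPT pm fm S'' t)"
          using gp emptier_nonempty[OF pl] OPT_mono[OF _ sG assms(2) hne hp]
          by (intro cINF_greatest) auto
      qed
      then show "GREEDY pm fm (greedy_empty fm (fst m) (snd m)) t =
       (INF S''\<in>emptier_moves fm (fst m) (snd m). OPT pm fm S'' t)"
        using Suc.IH[OF sG] mz by simp
    qed
    then show ?case by (simp cong: SUP_cong)
  qed
qed


theorem theorem4p4:
  fixes pm :: proc_mode and fm :: fill_mode and A :: state and n t :: nat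
  assumes "size A = n" and "n \<ge> 1"
    and "\<And>p. pm = Fixed p \<Longrightarrow> 1 \<le> p \<and> p \<le> n"
    and "fm = NonNeg \<Longrightarrow> (\<forall>x \<in># A. x \<ge> 0)"
  shows "GREEDY pm fm A t = OPT pm fm A t"
  using main[OF assms(1,2,3)] .

end
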